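(* Let $(\mathcal{X},\|\cdot\|)$ be a real Banach space, $P$ a probability distribution on a measurable space $\mathcal{E}$, and $Q,P_e:\mathcal{X}\to\mathcal{X}$ ($e\in\mathcal{E}$). Assume: (A1) $\|Q(\theta_1)-Q(\theta_2)\|\le\rho\|\theta_1-\theta_2\|$ for all $\theta_1,\theta_2$, with $\rho\in[0,1)$, and $\theta^\star$ is the unique fixed point of $Q$; (A2) $\|P_e(\theta_1)-P_e(\theta_2)\|\le L\|\theta_1-\theta_2\|$ for all $\theta_1,\theta_2$ and all $e$, with $L\ge0$; (A3) $W_e:=\|P_e(\theta^\star)-\theta^\star\|$ satisfies $\mathbb{E}_{e\sim P}[W_e]\le\sigma$ for some $\sigma\ge0$. Let $\theta_0\in\mathcal{X}$, let $e_0,e_1,\dots$ be i.i.d. with law $P$, and set $\theta_{t+1}=Q(P_{e_t}(\theta_t))$. Let $\gamma:=\rho L$ and $u_t:=\mathbb{E}[\|\theta_t-\theta^\star\|]$. Then: (i) if $\gamma<1$, $u_t\le\gamma^tu_0+\rho\sigma\frac{1-\gamma^t}{1-\gamma}$ for all $t$; (ii) $\mathbb{E}[\Omega(\theta_t;e_t)]\le2\gamma u_t+(1+\rho)\sigma$ for all $t$; (iii) if $\sigma=0$ and $\gamma<1$, then almost surely, for all $t$, $\|\theta_t-\theta^\star\|\le\gamma^t\|\theta_0-\theta^\star\|$ and $\Omega(\theta_t;e_t)\le2\gamma^{t+1}\|\theta_0-\theta^\star\|$.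
   Context: The order-gap is $\Omega(\theta;e):=\|Q(P_e(\theta))-P_e(Q(\theta))\|$. The events $e_t$ are independent of $\theta_0$ (which is deterministic), and $e_t$ is independent of $\theta_t$. *)

theory Defs
  imports "HOL-Probability.Probability"
begin

definition order_gap :: "('a::real_normed_vector \<Rightarrow> 'a) \<Rightarrow> ('e \<Rightarrow> 'a \<Rightarrow> 'a) \<Rightarrow> 'a \<Rightarrow> 'e \<Rightarrow> real" where
  "order_gap Q Pe \<theta> e = norm (Q (Pe e \<theta>) - Pe e (Q \<theta>))"

fun iter_seq :: "('a \<Rightarrow> 'a) \<Rightarrow> ('e \<Rightarrow> 'a \<Rightarrow> 'a) \<Rightarrow> 'a \<Rightarrow> (nat \<Rightarrow> 'w \<Rightarrow> 'e) \<Rightarrow> nat \<Rightarrow> 'w \<Rightarrow> 'a" where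
  "iter_seq Q Pe th0 e 0 \<omega> = th0"
| "iter_seq Q Pe th0 e (Suc t) \<omega> = Q (Pe (e t \<omega>) (iter_seq Q Pe th0 e t \<omega>))"

end

theory Submission
  imports Defs
begin

theorem theorem4p10:
  fixes M :: "'w measure" and P :: "'e measure"
    and Q :: "'a::banach \<Rightarrow> 'a" and Pe :: "'e \<Rightarrow> 'a \<Rightarrow> 'a"
    and \<rho> L \<sigma> :: real and \<theta>s \<theta>0 :: 'a
    and e :: "nat \<Rightarrow> 'w \<Rightarrow> 'e"
  assumes M_prob: "prob_space M"
    and P_prob: "prob_space P"
    and Pe_meas: "(\<lambda>(x, \<theta>). Pe x \<theta>) \<in> borel_measurable (P \<Otimes>\<^sub>M borel)"
    and A1_lip: "\<And>\<theta>1 \<theta>2. norm (Q \<theta>1 - Q \<theta>2) \<le> \<rho> * norm (\<theta>1 - \<theta>2)"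
    and A1_rho: "0 \<le> \<rho>" "\<rho> < 1"
    and A1_fix: "Q \<theta>s = \<theta>s"
    and A1_uniq: "\<And>\<theta>. Q \<theta> = \<theta> \<Longrightarrow> \<theta> = \<theta>s"
    and A2_lip: "\<And>x \<theta>1 \<theta>2. x \<in> space P \<Longrightarrow> norm (Pe x \<theta>1 - Pe x \<theta>2) \<le> L * norm (\<theta>1 - \<theta>2)"
    and A2_L: "0 \<le> L"
    and A3: "(\<integral>\<^sup>+ x. ennreal (norm (Pe x \<theta>s - \<theta>s)) \<partial>P) \<le> ennreal \<sigma>"
    and A3_\<sigma>: "0 \<le> \<sigma>"
    and e_indep: "prob_space.indep_vars M (\<lambda>_. P) e UNIV"
    and e_law: "\<And>t. distr M P (e t) = P"
  shows
    "(\<rho> * L < 1 \<longrightarrow> (\<forall>t.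
        (\<integral>\<^sup>+ \<omega>. ennreal (norm (iter_seq Q Pe \<theta>0 e t \<omega> - \<theta>s)) \<partial>M)
          \<le> ennreal ((\<rho> * L) ^ t) * (\<integral>\<^sup>+ \<omega>. ennreal (norm (iter_seq Q Pe \<theta>0 e 0 \<omega> - \<theta>s)) \<partial>M)
            + ennreal (\<rho> * \<sigma> * (1 - (\<rho> * L) ^ t) / (1 - \<rho> * L))))
   \<and> (\<forall>t.
        (\<integral>\<^sup>+ \<omega>. ennreal (order_gap Q Pe (iter_seq Q Pe \<theta>0 e t \<omega>) (e t \<omega>)) \<partial>M)
          \<le> ennreal (2 * (\<rho> * L)) * (\<integral>\<^sup>+ \<omega>. ennreal (norm (iter_seq Q Pe \<theta>0 e t \<omega> - \<theta>s)) \<partial>M)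
            + ennreal ((1 + \<rho>) * \<sigma>))
   \<and> (\<sigma> = 0 \<and> \<rho> * L < 1 \<longrightarrow>
        (AE \<omega> in M. \<forall>t.
           norm (iter_seq Q Pe \<theta>0 e t \<omega> - \<theta>s) \<le> (\<rho> * L) ^ t * norm (\<theta>0 - \<theta>s)
         \<and> order_gap Q Pe (iter_seq Q Pe \<theta>0 e t \<omega>) (e t \<omega>) \<le> 2 * (\<rho> * L) ^ (t + 1) * norm (\<theta>0 - \<theta>s)))"
proof -
  interpret M: prob_space M by (rule M_prob)
  interpret P: prob_space P by (rule P_prob)
  have e_meas: "e t \<in> measurable M P" for t
    using e_indep unfolding M.indep_vars_def by auto
  have e_sp: "\<omega> \<in> space M \<Longrightarrow> e t \<omega> \<in> space P" for t \<omega>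
    using measurable_space[OF e_meas] by blast
  define W where "W x = norm (Pe x \<theta>s - \<theta>s)" for x
  have Pes_meas: "(\<lambda>x. Pe x \<theta>s) \<in> borel_measurable P"
    using measurable_compose[OF measurable_Pair[OF measurable_ident_sets[OF refl] measurable_const[of \<theta>s]] Pe_meas]
    by simp
  have sub_meas: "(\<lambda>y. norm (y - \<theta>s)) \<in> borel_measurable borel"
    by (intro borel_measurable_continuous_onI continuous_intros)
  have W_meas: "W \<in> borel_measurable P"
    unfolding W_def using measurable_compose[OF Pes_meas sub_meas] by simp
  have "\<rho>-lipschitz_on UNIV Q"
    by (rule lipschitz_onI) (use A1_lip A1_rho in \<open>auto simp: dist_norm\<close>)
  then have Q_meas: "Q \<in> borel_measurable borel"
    by (intro borel_measurable_continuous_onI lipschitz_on_continuous_on)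
  define th where "th = iter_seq Q Pe \<theta>0 e"
  have th0: "th 0 \<omega> = \<theta>0" for \<omega> by (simp add: th_def)
  have thS: "th (Suc t) \<omega> = Q (Pe (e t \<omega>) (th t \<omega>))" for t \<omega> by (simp add: th_def)
  have th_meas: "th t \<in> borel_measurable M" for t
  proof (induction t)
    case 0
    then show ?case by (simp add: th0)
  next
    case (Suc t)
    have "(\<lambda>\<omega>. Pe (e t \<omega>) (th t \<omega>)) \<in> borel_measurable M"
      using measurable_compose[OF measurable_Pair[OF e_meas Suc.IH] Pe_meas] by simp
    from measurable_compose[OF this Q_meas] show ?case by (simp add: thS)
  qed
  have pt1: "norm (Q (Pe x \<theta>) - \<theta>s) \<le> \<rho> * L * norm (\<theta> - \<theta>s) + \<rho> * W x"
    if "x \<in> space P" for x \<theta>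
  proof -
    have a: "norm (Q (Pe x \<theta>) - \<theta>s) \<le> \<rho> * norm (Pe x \<theta> - \<theta>s)"
      using A1_lip[of "Pe x \<theta>" \<theta>s] A1_fix by simp
    have b: "norm (Pe x \<theta> - \<theta>s) \<le> norm (Pe x \<theta> - Pe x \<theta>s) + W x"
      unfolding W_def using norm_triangle_ineq[of "Pe x \<theta> - Pe x \<theta>s" "Pe x \<theta>s - \<theta>s"] by simp
    have c: "norm (Pe x \<theta> - \<theta>s) \<le> L * norm (\<theta> - \<theta>s) + W x"
      using b A2_lip[OF that, of \<theta> \<theta>s] by simp
    have "\<rho> * norm (Pe x \<theta> - \<theta>s) \<le> \<rho> * (L * norm (\<theta> - \<theta>s) + W x)"
      using c A1_rho by (intro mult_left_mono) auto
    then show ?thesis using a by (simp add: algebra_simps)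
  qed
  have pt2: "order_gap Q Pe \<theta> x \<le> 2 * (\<rho> * L) * norm (\<theta> - \<theta>s) + (1 + \<rho>) * W x"
    if "x \<in> space P" for x \<theta>
  proof -
    have a: "norm (Pe x (Q \<theta>) - \<theta>s) \<le> L * norm (Q \<theta> - \<theta>s) + W x"
      unfolding W_def using norm_triangle_ineq[of "Pe x (Q \<theta>) - Pe x \<theta>s" "Pe x \<theta>s - \<theta>s"]
        A2_lip[OF that, of "Q \<theta>" \<theta>s] by simp
    have b: "L * norm (Q \<theta> - \<theta>s) \<le> L * (\<rho> * norm (\<theta> - \<theta>s))"
      using A1_lip[of \<theta> \<theta>s] A1_fix A2_L by (simp add: mult_left_mono)
    have "order_gap Q Pe \<theta> x \<le> norm (Q (Pe x \<theta>) - \<theta>s) + norm (Pe x (Q \<theta>) - \<theta>s)"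
      unfolding order_gap_def using norm_triangle_ineq4[of "Q (Pe x \<theta>) - \<theta>s" "Pe x (Q \<theta>) - \<theta>s"]
      by simp
    then show ?thesis using pt1[OF that, of \<theta>] a b by (simp add: algebra_simps)
  qed
  have intW: "(\<integral>\<^sup>+\<omega>. ennreal (W (e t \<omega>)) \<partial>M) \<le> ennreal \<sigma>" for t
  proof -
    have "(\<integral>\<^sup>+\<omega>. ennreal (W (e t \<omega>)) \<partial>M) = (\<integral>\<^sup>+x. ennreal (W x) \<partial>distr M P (e t))"
      by (rule nn_integral_distr[symmetric]) (use e_meas W_meas in auto)
    also have "\<dots> = (\<integral>\<^sup>+x. ennreal (W x) \<partial>P)" by (simp add: e_law)
    finally show ?thesis using A3 by (simp add: W_def)
  qed
  have nt_meas: "(\<lambda>\<omega>. ennreal (norm (th t \<omega> - \<theta>s))) \<in> borel_measurable M" for t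
    using measurable_compose[OF th_meas[of t] sub_meas] by simp
  have We_meas: "(\<lambda>\<omega>. ennreal (W (e t \<omega>))) \<in> borel_measurable M" for t
    using measurable_compose[OF e_meas W_meas] by measurable
  have gen: "(\<integral>\<^sup>+\<omega>. ennreal (f \<omega>) \<partial>M)
      \<le> ennreal a * (\<integral>\<^sup>+\<omega>. ennreal (norm (th t \<omega> - \<theta>s)) \<partial>M) + ennreal (b * \<sigma>)"
    if fb: "\<And>\<omega>. \<omega> \<in> space M \<Longrightarrow> f \<omega> \<le> a * norm (th t \<omega> - \<theta>s) + b * W (e t \<omega>)"
      and ab: "0 \<le> a" "0 \<le> b" for f a b t
  proof -
    have Wn: "W x \<ge> 0" for x by (simp add: W_def)
    have "(\<integral>\<^sup>+\<omega>. ennreal (f \<omega>) \<partial>M) \<le> (\<integral>\<^sup>+\<omega>. ennreal a * ennreal (norm (th t \<omega> - \<theta>s)) + ennreal b * ennreal (W (e t \<omega>)) \<partial>M)"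
    proof (rule nn_integral_mono)
      fix \<omega> assume "\<omega> \<in> space M"
      then have "ennreal (f \<omega>) \<le> ennreal (a * norm (th t \<omega> - \<theta>s) + b * W (e t \<omega>))"
        using fb by (intro ennreal_leI) auto
      also have "\<dots> = ennreal a * ennreal (norm (th t \<omega> - \<theta>s)) + ennreal b * ennreal (W (e t \<omega>))"
        using ab Wn by (simp add: ennreal_plus ennreal_mult)
      finally show "ennreal (f \<omega>) \<le> \<dots>" .
    qed
    also have "\<dots> = ennreal a * (\<integral>\<^sup>+\<omega>. ennreal (norm (th t \<omega> - \<theta>s)) \<partial>M) + ennreal b * (\<integral>\<^sup>+\<omega>. ennreal (W (e t \<omega>)) \<partial>M)"
      using nt_meas We_meas by (simp add: nn_integral_add nn_integral_cmult)
    also have "\<dots> \<le> ennreal a * (\<integral>\<^sup>+\<omega>. ennreal (norm (th t \<omega> - \<theta>s)) \<partial>M) + ennreal b * ennreal \<sigma>"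
      by (intro add_left_mono mult_left_mono intW) auto
    also have "\<dots> = ennreal a * (\<integral>\<^sup>+\<omega>. ennreal (norm (th t \<omega> - \<theta>s)) \<partial>M) + ennreal (b * \<sigma>)"
      by (simp only: ennreal_mult[OF ab(2) A3_\<sigma>])
    finally show ?thesis .
  qed
  have g0: "0 \<le> \<rho> * L" using A1_rho A2_L by simp
  have step: "(\<integral>\<^sup>+\<omega>. ennreal (norm (th (Suc t) \<omega> - \<theta>s)) \<partial>M)
      \<le> ennreal (\<rho> * L) * (\<integral>\<^sup>+\<omega>. ennreal (norm (th t \<omega> - \<theta>s)) \<partial>M) + ennreal (\<rho> * \<sigma>)" for t
    by (rule gen) (use pt1 e_sp thS g0 A1_rho in auto)
  have partii: "(\<integral>\<^sup>+\<omega>. ennreal (order_gap Q Pe (th t \<omega>) (e t \<omega>)) \<partial>M)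
      \<le> ennreal (2 * (\<rho> * L)) * (\<integral>\<^sup>+\<omega>. ennreal (norm (th t \<omega> - \<theta>s)) \<partial>M) + ennreal ((1 + \<rho>) * \<sigma>)" for t
    by (rule gen) (use pt2 e_sp g0 A1_rho in auto)
  have parti: "(\<integral>\<^sup>+\<omega>. ennreal (norm (th t \<omega> - \<theta>s)) \<partial>M)
      \<le> ennreal ((\<rho> * L) ^ t) * (\<integral>\<^sup>+\<omega>. ennreal (norm (th 0 \<omega> - \<theta>s)) \<partial>M)
        + ennreal (\<rho> * \<sigma> * (1 - (\<rho> * L) ^ t) / (1 - \<rho> * L))" if g1: "\<rho> * L < 1" for t
  proof (induction t)
    case 0
    then show ?case by simp
  next
    case (Suc t)
    define \<gamma> where "\<gamma> = \<rho> * L"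
    define U0 where "U0 = (\<integral>\<^sup>+\<omega>. ennreal (norm (th 0 \<omega> - \<theta>s)) \<partial>M)"
    have gp: "0 \<le> \<gamma>" "\<gamma> < 1" using g0 g1 by (auto simp: \<gamma>_def)
    have c0: "0 \<le> \<rho> * \<sigma> * (1 - \<gamma> ^ t) / (1 - \<gamma>)"
      using gp A1_rho A3_\<sigma> by (simp add: power_le_one)
    have "(\<integral>\<^sup>+\<omega>. ennreal (norm (th (Suc t) \<omega> - \<theta>s)) \<partial>M)
      \<le> ennreal \<gamma> * (ennreal (\<gamma> ^ t) * U0 + ennreal (\<rho> * \<sigma> * (1 - \<gamma> ^ t) / (1 - \<gamma>))) + ennreal (\<rho> * \<sigma>)"
      using step[of t] Suc.IH unfolding \<gamma>_def[symmetric] U0_def[symmetric]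
      by (meson add_right_mono dual_order.trans mult_left_mono zero_le)
    also have "\<dots> = ennreal (\<gamma> ^ Suc t) * U0 + ennreal (\<gamma> * (\<rho> * \<sigma> * (1 - \<gamma> ^ t) / (1 - \<gamma>)) + \<rho> * \<sigma>)"
    proof -
      define c where "c = \<rho> * \<sigma> * (1 - \<gamma> ^ t) / (1 - \<gamma>)"
      have c0': "0 \<le> c" using c0 by (simp add: c_def)
      have rs: "0 \<le> \<rho> * \<sigma>" using A1_rho A3_\<sigma> by simp
      have h1: "ennreal \<gamma> * ennreal (\<gamma> ^ t) = ennreal (\<gamma> ^ Suc t)"
        using ennreal_mult[OF gp(1) zero_le_power[OF gp(1)], symmetric] by simp
      have h2: "ennreal \<gamma> * ennreal c + ennreal (\<rho> * \<sigma>) = ennreal (\<gamma> * c + \<rho> * \<sigma>)"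
        using ennreal_mult[OF gp(1) c0', symmetric] ennreal_plus[OF mult_nonneg_nonneg[OF gp(1) c0'] rs, symmetric]
        by simp
      have "ennreal \<gamma> * (ennreal (\<gamma> ^ t) * U0 + ennreal c) + ennreal (\<rho> * \<sigma>)
          = (ennreal \<gamma> * ennreal (\<gamma> ^ t)) * U0 + (ennreal \<gamma> * ennreal c + ennreal (\<rho> * \<sigma>))"
        by (simp only: distrib_left mult.assoc add.assoc)
      also have "\<dots> = ennreal (\<gamma> ^ Suc t) * U0 + ennreal (\<gamma> * c + \<rho> * \<sigma>)"
        by (simp only: h1 h2)
      finally show ?thesis unfolding c_def by simp
    qed
    also have "\<gamma> * (\<rho> * \<sigma> * (1 - \<gamma> ^ t) / (1 - \<gamma>)) + \<rho> * \<sigma> = \<rho> * \<sigma> * (1 - \<gamma> ^ Suc t) / (1 - \<gamma>)"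
      using gp by (simp add: field_simps)
    finally show ?case unfolding \<gamma>_def U0_def .
  qed
  have partiii: "AE \<omega> in M. \<forall>t.
           norm (th t \<omega> - \<theta>s) \<le> (\<rho> * L) ^ t * norm (\<theta>0 - \<theta>s)
         \<and> order_gap Q Pe (th t \<omega>) (e t \<omega>) \<le> 2 * (\<rho> * L) ^ (t + 1) * norm (\<theta>0 - \<theta>s)"
    if s0: "\<sigma> = 0"
  proof -
    have "(\<integral>\<^sup>+x. ennreal (W x) \<partial>P) = 0" using A3 s0 by (simp add: W_def)
    then have "AE x in P. ennreal (W x) = 0"
      using W_meas by (subst (asm) nn_integral_0_iff_AE) auto
    then have aeP: "AE x in P. W x = 0"
      by (rule eventually_mono) (simp add: W_def)
    have "AE \<omega> in M. W (e t \<omega>) = 0" for t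
    proof -
      have "AE x in distr M P (e t). W x = 0" unfolding e_law by (rule aeP)
      then show ?thesis
        by (subst (asm) AE_distr_iff[OF e_meas]) (use W_meas in auto)
    qed
    then have "AE \<omega> in M. \<forall>t. W (e t \<omega>) = 0" by (simp add: AE_all_countable)
    then show ?thesis
    proof (rule AE_mp[OF _ AE_I2[OF impI]])
      fix \<omega> assume \<omega>: "\<omega> \<in> space M" and W0: "\<forall>t. W (e t \<omega>) = 0"
      have nb: "norm (th t \<omega> - \<theta>s) \<le> (\<rho> * L) ^ t * norm (\<theta>0 - \<theta>s)" for t
      proof (induction t)
        case 0 then show ?case by (simp add: th0)
      next
        case (Suc t)
        have "norm (th (Suc t) \<omega> - \<theta>s) \<le> \<rho> * L * norm (th t \<omega> - \<theta>s)"
          using pt1[OF e_sp[OF \<omega>], of t "th t \<omega>"] W0 by (simp add: thS)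
        also have "\<dots> \<le> \<rho> * L * ((\<rho> * L) ^ t * norm (\<theta>0 - \<theta>s))"
          using Suc.IH g0 by (rule mult_left_mono)
        finally show ?case by (simp add: mult.assoc)
      qed
      show "\<forall>t. norm (th t \<omega> - \<theta>s) \<le> (\<rho> * L) ^ t * norm (\<theta>0 - \<theta>s)
         \<and> order_gap Q Pe (th t \<omega>) (e t \<omega>) \<le> 2 * (\<rho> * L) ^ (t + 1) * norm (\<theta>0 - \<theta>s)"
      proof (intro allI conjI)
        fix t
        show "norm (th t \<omega> - \<theta>s) \<le> (\<rho> * L) ^ t * norm (\<theta>0 - \<theta>s)" by (rule nb)
        have "order_gap Q Pe (th t \<omega>) (e t \<omega>) \<le> 2 * (\<rho> * L) * norm (th t \<omega> - \<theta>s)"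
          using pt2[OF e_sp[OF \<omega>], of "th t \<omega>" t] W0 by simp
        also have "\<dots> \<le> 2 * (\<rho> * L) * ((\<rho> * L) ^ t * norm (\<theta>0 - \<theta>s))"
          using nb[of t] g0 by (intro mult_left_mono) auto
        finally show "order_gap Q Pe (th t \<omega>) (e t \<omega>) \<le> 2 * (\<rho> * L) ^ (t + 1) * norm (\<theta>0 - \<theta>s)"
          by (simp add: mult.assoc mult.left_commute)
      qed
    qed
  qed
  show ?thesis
    unfolding th_def[symmetric] using parti partii partiii by blast
qed

end
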